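(* There is a universal constant $C_1>1$ such that the following holds. Fix any $\rho,\delta\in(0,1)$. For every sufficiently large $d\in\mathbb{N}$, all $h,N\in\mathbb{N}$, and every $(u_1,u_2)\in\mathrm{Bases}^{2d}_{\rho,\delta}$, $$\Pr\left[\|R_{h,N}u_1\|_\infty\le \tfrac{1}{\sqrt{\delta d}}\ \text{and}\ \|R_{h,N}u_2\|_\infty\le\tfrac{1}{\sqrt{\delta d}}\right]\le C_1^h\,(\rho^4\delta d)^{-h},$$ where $R_{h,N}$ is an $h\times N$ matrix with i.i.d. uniform $\pm1$ entries.
   Context: $\mathbb{S}^{N-1}$ is the Euclidean unit sphere in $\mathbb{R}^N$. For $d\le N$, $S^N_d:=\{u\in\mathbb{R}^N:\|u\|_2=1,\ \|u\|_0\le d\}$, where $\|u\|_0$ is the number of nonzero coordinates and $\mathrm{supp}(u)$ the set of nonzero coordinates. For $\rho,\delta>0$, $\mathrm{Comp}^d_{\rho,\delta}:=\{u\in S^N_d : \exists\,\overline{T}\subseteq\mathrm{supp}(u),\ |\overline{T}|\le\delta d,\ \|u_{\mathrm{supp}(u)\setminus\overline{T}}\|_2\le\rho\}$ (here $u_A$ is the restriction of $u$ to coordinates in $A$). $\mathrm{Bases}^{d'}_{\rho,\delta}$ is the set of pairs $(u_1,u_2)\in\mathbb{S}^{N-1}\times\mathbb{S}^{N-1}$ such that $u_1,u_2$ are orthonormal, $|\mathrm{supp}(u_1)\cup\mathrm{supp}(u_2)|\le d'$, and $\mathrm{span}\{u_1,u_2\}\cap\mathrm{Comp}^{d'}_{\rho,\delta}=\emptyset$.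 *)

theory Defs
  imports "HOL-Probability.Probability"
begin

text \<open>Vectors in R^N are represented as functions nat => real vanishing outside {0..<N}.\<close>

definition vec_on :: "nat \<Rightarrow> (nat \<Rightarrow> real) \<Rightarrow> bool" where
  "vec_on N u \<longleftrightarrow> (\<forall>j. N \<le> j \<longrightarrow> u j = 0)"

definition vsupp :: "(nat \<Rightarrow> real) \<Rightarrow> nat set" where
  "vsupp u = {j. u j \<noteq> 0}"

definition l2norm :: "nat \<Rightarrow> (nat \<Rightarrow> real) \<Rightarrow> real" where
  "l2norm N u = sqrt (\<Sum>j<N. (u j)\<^sup>2)"

definition unit_sphere :: "nat \<Rightarrow> (nat \<Rightarrow> real) set" where
  "unit_sphere N = {u. vec_on N u \<and> l2norm N u = 1}"

definition sparse_sphere :: "nat \<Rightarrow> nat \<Rightarrow> (nat \<Rightarrow> real) set" where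
  "sparse_sphere N d = {u \<in> unit_sphere N. card (vsupp u) \<le> d}"

definition Comp :: "nat \<Rightarrow> nat \<Rightarrow> real \<Rightarrow> real \<Rightarrow> (nat \<Rightarrow> real) set" where
  "Comp N d \<rho> \<delta> = {u \<in> sparse_sphere N d.
      \<exists>T. T \<subseteq> vsupp u \<and> real (card T) \<le> \<delta> * real d \<and>
          sqrt (\<Sum>j\<in>vsupp u - T. (u j)\<^sup>2) \<le> \<rho>}"

definition Bases :: "nat \<Rightarrow> nat \<Rightarrow> real \<Rightarrow> real \<Rightarrow> ((nat \<Rightarrow> real) \<times> (nat \<Rightarrow> real)) set" where
  "Bases N d' \<rho> \<delta> = {(u1, u2). u1 \<in> unit_sphere N \<and> u2 \<in> unit_sphere N \<and>
      (\<Sum>j<N. u1 j * u2 j) = 0 \<and>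
      card (vsupp u1 \<union> vsupp u2) \<le> d' \<and>
      (\<forall>a b. (\<lambda>j. a * u1 j + b * u2 j) \<notin> Comp N d' \<rho> \<delta>)}"

definition sign_matrices :: "nat \<Rightarrow> nat \<Rightarrow> (nat \<times> nat \<Rightarrow> real) set" where
  "sign_matrices h N = ({0..<h} \<times> {0..<N}) \<rightarrow>\<^sub>E {-1, 1}"

definition rademacher_matrix :: "nat \<Rightarrow> nat \<Rightarrow> (nat \<times> nat \<Rightarrow> real) pmf" where
  "rademacher_matrix h N = pmf_of_set (sign_matrices h N)"

definition mat_vec :: "nat \<Rightarrow> (nat \<times> nat \<Rightarrow> real) \<Rightarrow> (nat \<Rightarrow> real) \<Rightarrow> nat \<Rightarrow> real" where
  "mat_vec N R u i = (\<Sum>j<N. R (i, j) * u j)"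

definition sup_norm :: "nat \<Rightarrow> (nat \<Rightarrow> real) \<Rightarrow> real" where
  "sup_norm h v = Max (insert 0 ((\<lambda>i. \<bar>v i\<bar>) ` {0..<h}))"

end

theory Submission
  imports Defs
begin


lemma cos_half: "cos (x::real) = 1 - 2 * (sin (x/2))^2"
  using cos_double_sin[of "x/2"] by simp

lemma cos_lower: "1 - x^2/2 \<le> cos (x::real)"
proof -
  have "\<bar>sin (x/2)\<bar> \<le> \<bar>x/2\<bar>" by (rule abs_sin_x_le_abs_x)
  hence "(sin (x/2))^2 \<le> (x/2)^2"
    by (metis abs_le_square_iff)
  thus ?thesis unfolding cos_half[of x] by (simp add: power_divide)
qed

lemma sin_lower: "0 \<le> y \<Longrightarrow> y - y^3/6 \<le> sin (y::real)"
proof -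
  assume y: "0 \<le> y"
  have b: "\<bar>sin y - (\<Sum>m<3. sin_coeff m * y ^ m)\<bar> \<le> inverse (fact 3) * \<bar>y\<bar> ^ 3"
    by (rule Maclaurin_sin_bound)
  have s: "(\<Sum>m<3. sin_coeff m * y ^ m) = y"
  proof -
    have "{..<3::nat} = {0,1,2}" by auto
    thus ?thesis by (simp add: sin_coeff_def)
  qed
  have f: "inverse (fact 3) * \<bar>y\<bar> ^ 3 = y^3/6"
  proof -
    have "(fact 3::real) = 6" by (simp add: eval_nat_numeral)
    thus ?thesis using y by (simp add: field_simps)
  qed
  have "\<bar>sin y - y\<bar> \<le> y^3/6" using b unfolding s f .
  thus ?thesis by linarith
qed

lemma cos_upper: assumes "\<bar>x\<bar> \<le> 1" shows "cos (x::real) \<le> 1 - x^2/3"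
proof -
  define y where "y = \<bar>x\<bar>/2"
  have y0: "0 \<le> y" and y1: "y \<le> 1/2" using assms by (auto simp: y_def)
  have sy: "sin (x/2)^2 = sin y ^ 2"
    by (cases "x \<ge> 0") (auto simp: y_def)
  have "y * (23/24) \<le> y - y^3/6"
  proof -
    have "y^2 \<le> (1/2)^2" using y0 y1 by (intro power_mono) auto
    hence "y * y^2 \<le> y * (1/4)" using y0 by (intro mult_left_mono) (auto simp: power_divide)
    hence "y^3 \<le> y/4" by (simp add: power3_eq_cube power2_eq_square)
    thus ?thesis by simp
  qed
  also have "\<dots> \<le> sin y" using sin_lower[OF y0] .
  finally have "(y*(23/24))^2 \<le> sin y ^2" using y0 by (intro power_mono) auto
  hence "sin y ^ 2 \<ge> y^2 * (529/576)" by (simp add: power_mult_distrib power_divide)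
  moreover have "y^2 = x^2/4" by (simp add: y_def power_divide)
  ultimately have "sin y^2 \<ge> x^2 * (529/2304)" by simp
  hence "sin (x/2)^2 \<ge> x^2/6" using sy zero_le_power2[of x] by linarith
  thus ?thesis unfolding cos_half[of x] by simp
qed

lemma abs_cos_exp: assumes "\<bar>x\<bar> \<le> 1" shows "\<bar>cos (x::real)\<bar> \<le> exp (-(x^2)/3)"
proof -
  have "\<bar>x\<bar>^2 \<le> 1^2" using assms by (intro power_mono) auto
  hence "x^2 \<le> 1" by simp
  hence "0 \<le> cos x" using cos_lower[of x] by linarith
  moreover have "1 + (-(x^2)/3) \<le> exp (-(x^2)/3)" by (rule exp_ge_add_one_self)
  ultimately show ?thesis using cos_upper[OF assms] by simp
qed



definition I1 :: "real \<Rightarrow> real" where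
  "I1 x = integral {0..1} (\<lambda>s. (1-s) * cos (s*x))"

lemma cont_ker: "continuous_on {0..1} (\<lambda>s::real. (1-s) * cos (s*x))"
  by (intro continuous_intros)

lemma I1_closed: assumes x: "x \<noteq> 0" shows "I1 x = (1 - cos x) / x^2"
proof -
  define F where "F s = (1-s) * sin (s*x) / x - cos (s*x) / x^2" for s
  have "((\<lambda>s. (1-s) * cos (s*x)) has_integral (F 1 - F 0)) {0..1}"
  proof (rule fundamental_theorem_of_calculus)
    fix s :: real assume "s \<in> {0..1}"
    have "(F has_real_derivative (1-s) * cos (s*x)) (at s within {0..1})"
      unfolding F_def
      using x by (auto intro!: derivative_eq_intros simp: field_simps power2_eq_square)
    thus "(F has_vector_derivative (1-s) * cos (s*x)) (at s within {0..1})"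
      by (simp add: has_real_derivative_iff_has_vector_derivative)
  qed simp
  moreover have "F 1 - F 0 = (1 - cos x) / x^2" by (simp add: F_def diff_divide_distrib)
  ultimately show ?thesis unfolding I1_def by (simp add: integral_unique)
qed

lemma I1_lower: assumes x: "\<bar>x\<bar> \<le> 1" shows "I1 x \<ge> 1/4"
proof -
  define F where "F s = s/2 - s^2/4" for s :: real
  have i1: "((\<lambda>s. (1-s)/2) has_integral (F 1 - F 0)) {0..1}"
  proof (rule fundamental_theorem_of_calculus)
    fix s :: real assume "s \<in> {0..1}"
    have "(F has_real_derivative (1-s)/2) (at s within {0..1})"
      unfolding F_def
      by (auto intro!: derivative_eq_intros simp: field_simps)
    thus "(F has_vector_derivative (1-s)/2) (at s within {0..1})"
      by (simp add: has_real_derivative_iff_has_vector_derivative)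
  qed simp
  have i2: "((\<lambda>s. (1-s) * cos (s*x)) has_integral I1 x) {0..1}"
    unfolding I1_def using integrable_continuous_interval[OF cont_ker] 
    by (simp add: has_integral_integral)
  have "F 1 - F 0 \<le> I1 x"
  proof (rule has_integral_le[OF i1 i2])
    fix s :: real assume s: "s \<in> {0..1}"
    have "\<bar>s*x\<bar> \<le> 1" using s x by (auto simp: abs_mult intro: mult_le_one)
    hence "\<bar>s*x\<bar>^2 \<le> 1^2" by (intro power_mono) auto
    hence "(s*x)^2 \<le> 1" by simp
    hence "1/2 \<le> cos (s*x)" using cos_lower[of "s*x"] by linarith
    thus "(1-s)/2 \<le> (1-s) * cos (s*x)" using s
      by (metis atLeastAtMost_iff diff_ge_0_iff_ge mult_left_mono mult.commute times_divide_eq_right mult_1)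
  qed
  thus ?thesis by (simp add: F_def)
qed

lemma I1_nonneg: "0 \<le> I1 x"
proof (cases "\<bar>x\<bar> \<le> 1")
  case True thus ?thesis using I1_lower[OF True] by linarith
next
  case False hence "x \<noteq> 0" by auto
  thus ?thesis by (simp add: I1_closed)
qed

lemma J_bound: assumes A: "A > 0"
  shows "integral {0..1} (\<lambda>t. exp (- A * t^2)) \<le> pi / (2 * sqrt A)"
proof -
  define F where "F t = arctan (sqrt A * t) / sqrt A" for t
  have sA: "sqrt A > 0" using A by simp
  have i1: "((\<lambda>t. 1 / (1 + A * t^2)) has_integral (F 1 - F 0)) {0..1}"
  proof (rule fundamental_theorem_of_calculus)
    fix t :: real assume "t \<in> {0..1}"
    have "(F has_real_derivative 1 / (1 + A * t^2)) (at t within {0..1})"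
      unfolding F_def
      using sA A apply (auto intro!: derivative_eq_intros simp: field_simps power_mult_distrib)
      proof -
        have "A + A*(A*t^2) = A*(1+A*t^2)" by algebra
        thus "A / (A + A * (A * t\<^sup>2)) = 1 / (1 + A * t\<^sup>2)" using A by simp
      qed
    thus "(F has_vector_derivative 1 / (1 + A * t^2)) (at t within {0..1})"
      by (simp add: has_real_derivative_iff_has_vector_derivative)
  qed simp
  have i2: "((\<lambda>t. exp (- A * t^2)) has_integral integral {0..1} (\<lambda>t. exp (- A * t^2))) {0..1}"
    by (intro integrable_integral integrable_continuous_interval continuous_intros)
  have "integral {0..1} (\<lambda>t. exp (- A * t^2)) \<le> F 1 - F 0"
  proof (rule has_integral_le[OF i2 i1])
    fix t :: real assume t: "t \<in> {0..1}"
    have p: "0 < 1 + A * t^2" using A by (simp add: add_pos_nonneg)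
    have "1 + A*t^2 \<le> exp (A*t^2)" using exp_ge_add_one_self[of "A*t^2"] by simp
    hence "exp (- A*t^2) * (1 + A*t^2) \<le> exp (-A*t^2) * exp (A*t^2)"
      by (intro mult_left_mono) auto
    also have "\<dots> = 1" by (simp add: exp_minus[symmetric] exp_add[symmetric])
    finally show "exp (- A * t^2) \<le> 1 / (1 + A * t^2)" using p by (simp add: field_simps)
  qed
  also have "F 1 - F 0 \<le> pi / (2 * sqrt A)"
  proof -
    have "arctan (sqrt A) \<le> pi/2" using arctan_ubound[of "sqrt A"] by simp
    hence "arctan (sqrt A) / sqrt A \<le> (pi/2) / sqrt A" using sA by (intro divide_right_mono) auto
    thus ?thesis by (simp add: F_def)
  qed
  finally show ?thesis .
qed



lemma char_sum:
  "(\<Sum>r \<in> PiE {..<N} (\<lambda>_. {-1,1::real}). cos (\<Sum>j<N. r j * c j)) = 2^N * (\<Prod>j<N. cos (c j))"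
proof -
  define f where "f j y = exp (\<i> * complex_of_real (y * c j))" for j y
  have E: "complex_of_real (cos (\<Sum>j<N. r j * c j)) + \<i> * complex_of_real (sin (\<Sum>j<N. r j * c j))
        = (\<Prod>j<N. f j (r j))" for r
  proof -
    have "complex_of_real (cos (\<Sum>j<N. r j * c j)) + \<i> * complex_of_real (sin (\<Sum>j<N. r j * c j))
        = exp (\<i> * complex_of_real (\<Sum>j<N. r j * c j))"
      by (simp only: exp_Euler cos_of_real sin_of_real)
    also have "\<dots> = exp (\<Sum>j<N. \<i> * complex_of_real (r j * c j))"
      by (simp add: sum_distrib_left)
    also have "\<dots> = (\<Prod>j<N. f j (r j))" by (simp add: exp_sum f_def)
    finally show ?thesis .
  qed
  have S2: "(\<Sum>y\<in>{-1,1::real}. f j y) = complex_of_real (2 * cos (c j))" for j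
  proof -
    have "(\<Sum>y\<in>{-1,1::real}. f j y) = exp (\<i> * complex_of_real (c j)) + exp (- (\<i> * complex_of_real (c j)))"
      by (simp add: f_def)
    also have "\<dots> = 2 * cos (complex_of_real (c j))" by (simp add: cos_exp_eq)
    also have "\<dots> = complex_of_real (2 * cos (c j))" by (simp add: cos_of_real)
    finally show ?thesis .
  qed
  have "(\<Sum>r \<in> PiE {..<N} (\<lambda>_. {-1,1::real}). (\<Prod>j<N. f j (r j))) = (\<Prod>j<N. \<Sum>y\<in>{-1,1::real}. f j y)"
    by (rule prod_sum_PiE[symmetric]) auto
  also have "\<dots> = complex_of_real (\<Prod>j<N. 2 * cos (c j))" by (simp add: S2)
  also have "(\<Prod>j<N. 2 * cos (c j)) = 2^N * (\<Prod>j<N. cos (c j))" by (simp add: prod.distrib)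
  finally have "Re (\<Sum>r \<in> PiE {..<N} (\<lambda>_. {-1,1::real}). (\<Prod>j<N. f j (r j))) = 
     Re (complex_of_real (2^N * (\<Prod>j<N. cos (c j))))"
    by (simp only:)
  hence "Re (\<Sum>r \<in> PiE {..<N} (\<lambda>_. {-1,1::real}). (\<Prod>j<N. f j (r j))) = 2^N * (\<Prod>j<N. cos (c j))"
    by (simp only: Re_complex_of_real)
  moreover have "Re (\<Sum>r \<in> PiE {..<N} (\<lambda>_. {-1,1::real}). (\<Prod>j<N. f j (r j)))
     = (\<Sum>r \<in> PiE {..<N} (\<lambda>_. {-1,1::real}). cos (\<Sum>j<N. r j * c j))"
    unfolding E[symmetric] by (simp add: Re_sum)
  ultimately show ?thesis by simp
qed



lemma cos_prod_sum: "cos (a::real) * cos b = (cos (a+b) + cos (a-b)) / 2"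
  by (simp add: cos_add cos_diff)

lemma row_bound:
  fixes c1 c2 :: "nat \<Rightarrow> real" and A :: real
  assumes A: "A > 0"
    and hp: "\<And>s t. 0\<le>s \<Longrightarrow> s\<le>1 \<Longrightarrow> 0\<le>t \<Longrightarrow> t\<le>1 \<Longrightarrow>
       \<bar>\<Prod>j<N. cos (s*c1 j + t*c2 j)\<bar> \<le> exp (- A * s^2) * exp (- A * t^2)"
    and hm: "\<And>s t. 0\<le>s \<Longrightarrow> s\<le>1 \<Longrightarrow> 0\<le>t \<Longrightarrow> t\<le>1 \<Longrightarrow>
       \<bar>\<Prod>j<N. cos (s*c1 j - t*c2 j)\<bar> \<le> exp (- A * s^2) * exp (- A * t^2)"
  shows "real (card {r \<in> PiE {..<N} (\<lambda>_. {-1,1::real}).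
             \<bar>\<Sum>j<N. r j * c1 j\<bar> \<le> 1 \<and> \<bar>\<Sum>j<N. r j * c2 j\<bar> \<le> 1}) \<le> 4 * pi^2 / A * 2^N"
proof -
  define S where "S = PiE {..<N} (\<lambda>_. {-1,1::real})"
  define X where "X r = (\<Sum>j<N. r j * c1 j)" for r
  define Y where "Y r = (\<Sum>j<N. r j * c2 j)" for r
  define J where "J = integral {0..1} (\<lambda>t. exp (- A * t^2))"
  have fS: "finite S" unfolding S_def by (intro finite_PiE) auto
  have cardS: "card S = 2^N" unfolding S_def by (simp add: card_PiE) (metis numeral_2_eq_2)
  have a: "real (card {r\<in>S. \<bar>X r\<bar> \<le> 1 \<and> \<bar>Y r\<bar> \<le> 1}) \<le> (\<Sum>r\<in>S. 16 * (I1 (X r) * I1 (Y r)))"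
  proof -
    have "real (card {r\<in>S. \<bar>X r\<bar> \<le> 1 \<and> \<bar>Y r\<bar> \<le> 1}) = (\<Sum>r\<in>S. if \<bar>X r\<bar> \<le> 1 \<and> \<bar>Y r\<bar> \<le> 1 then 1 else 0)"
      using fS by (subst sum.inter_filter[symmetric]) simp_all
    also have "\<dots> \<le> (\<Sum>r\<in>S. 16 * (I1 (X r) * I1 (Y r)))"
    proof (rule sum_mono)
      fix r assume "r \<in> S"
      show "(if \<bar>X r\<bar> \<le> 1 \<and> \<bar>Y r\<bar> \<le> 1 then 1 else 0) \<le> 16 * (I1 (X r) * I1 (Y r))"
      proof (cases "\<bar>X r\<bar> \<le> 1 \<and> \<bar>Y r\<bar> \<le> 1")
        case True
        hence "1/4 * (1/4) \<le> I1 (X r) * I1 (Y r)"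
          using I1_lower I1_nonneg by (intro mult_mono) auto
        thus ?thesis using True by simp
      next
        case False
        have "0 \<le> I1 (X r) * I1 (Y r)" using I1_nonneg by simp
        thus ?thesis using False by (subst if_not_P) auto
      qed
    qed
    finally show ?thesis .
  qed
  define H where "H s = (\<Sum>r\<in>S. (1-s) * cos (s * X r) * I1 (Y r))" for s
  have contH: "continuous_on {0..1} H" unfolding H_def by (intro continuous_intros)
  have b: "(\<Sum>r\<in>S. I1 (X r) * I1 (Y r)) = integral {0..1} H"
  proof -
    have e: "I1 (X r) * I1 (Y r) = integral {0..1} (\<lambda>s. (1-s) * cos (s * X r) * I1 (Y r))" for r
      unfolding I1_def[of "X r"] by (simp add: integral_mult_left)
    have "(\<Sum>r\<in>S. I1 (X r) * I1 (Y r)) = (\<Sum>r\<in>S. integral {0..1} (\<lambda>s. (1-s) * cos (s * X r) * I1 (Y r)))"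
      by (rule sum.cong[OF refl e])
    also have "\<dots> = integral {0..1} H" unfolding H_def
      by (rule integral_sum[symmetric], rule fS, intro integrable_continuous_interval continuous_intros)
    finally show ?thesis .
  qed
  have c: "H s \<le> 2^N * exp (- A * s^2) * J" if s: "s \<in> {0..1}" for s
  proof -
    define G where "G t = (\<Sum>r\<in>S. (1-s) * cos (s * X r) * ((1-t) * cos (t * Y r)))" for t
    have "H s = (\<Sum>r\<in>S. integral {0..1} (\<lambda>t. (1-s) * cos (s * X r) * ((1-t) * cos (t * Y r))))"
      unfolding H_def I1_def by (simp add: integral_mult_right)
    also have "\<dots> = integral {0..1} G" unfolding G_def
      by (rule integral_sum[symmetric], rule fS, intro integrable_continuous_interval continuous_intros)
    also have "\<dots> \<le> integral {0..1} (\<lambda>t. 2^N * exp (- A * s^2) * exp (- A * t^2))"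
    proof (rule integral_le)
      show "G integrable_on {0..1}" unfolding G_def
        by (intro integrable_continuous_interval continuous_intros)
      show "(\<lambda>t. 2^N * exp (- A * s^2) * exp (- A * t^2)) integrable_on {0..1}"
        by (intro integrable_continuous_interval continuous_intros)
    next
      fix t :: real assume t: "t \<in> {0..1}"
      have Gt: "G t = (1-s) * (1-t) * (\<Sum>r\<in>S. cos (s * X r) * cos (t * Y r))"
        unfolding G_def sum_distrib_left by (rule sum.cong) (auto simp: algebra_simps)
      have "(\<Sum>r\<in>S. cos (s * X r) * cos (t * Y r)) =
            ((\<Sum>r\<in>S. cos (\<Sum>j<N. r j * (s*c1 j + t*c2 j))) + (\<Sum>r\<in>S. cos (\<Sum>j<N. r j * (s*c1 j - t*c2 j)))) / 2"
      proof -
        have e2: "cos (s * X r) * cos (t * Y r) =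
           (cos (\<Sum>j<N. r j * (s*c1 j + t*c2 j)) + cos (\<Sum>j<N. r j * (s*c1 j - t*c2 j))) / 2" for r
        proof -
          have "s * X r + t * Y r = (\<Sum>j<N. r j * (s*c1 j + t*c2 j))"
            unfolding X_def Y_def sum_distrib_left sum.distrib[symmetric] by (rule sum.cong) (auto simp: algebra_simps)
          moreover have "s * X r - t * Y r = (\<Sum>j<N. r j * (s*c1 j - t*c2 j))"
            unfolding X_def Y_def sum_distrib_left sum_subtractf[symmetric] by (rule sum.cong) (auto simp: algebra_simps)
          ultimately show ?thesis using cos_prod_sum[of "s * X r" "t * Y r"] by simp
        qed
        hence "(\<Sum>r\<in>S. cos (s * X r) * cos (t * Y r)) = (\<Sum>r\<in>S. (cos (\<Sum>j<N. r j * (s*c1 j + t*c2 j)) + cos (\<Sum>j<N. r j * (s*c1 j - t*c2 j))) / 2)"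
          by (intro sum.cong refl)
        thus ?thesis by (simp only: sum.distrib sum_divide_distrib[symmetric])
      qed
      also have "\<dots> = 2^N * ((\<Prod>j<N. cos (s*c1 j + t*c2 j)) + (\<Prod>j<N. cos (s*c1 j - t*c2 j))) / 2"
        unfolding S_def char_sum by (simp add: algebra_simps)
      finally have V: "(\<Sum>r\<in>S. cos (s * X r) * cos (t * Y r)) =
          2^N * ((\<Prod>j<N. cos (s*c1 j + t*c2 j)) + (\<Prod>j<N. cos (s*c1 j - t*c2 j))) / 2" .
      have "\<bar>(\<Prod>j<N. cos (s*c1 j + t*c2 j)) + (\<Prod>j<N. cos (s*c1 j - t*c2 j))\<bar> \<le> 2 * (exp (- A * s^2) * exp (- A * t^2))"
        using hp[of s t] hm[of s t] s t by auto
      hence absV: "\<bar>\<Sum>r\<in>S. cos (s * X r) * cos (t * Y r)\<bar> \<le> 2^N * (exp (- A * s^2) * exp (- A * t^2))"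
        unfolding V by (simp add: abs_mult)
      have "G t \<le> \<bar>G t\<bar>" by simp
      also have "\<bar>G t\<bar> = (1-s) * (1-t) * \<bar>\<Sum>r\<in>S. cos (s * X r) * cos (t * Y r)\<bar>"
        unfolding Gt using s t by (simp add: abs_mult)
      also have "\<dots> \<le> 1 * \<bar>\<Sum>r\<in>S. cos (s * X r) * cos (t * Y r)\<bar>"
        using s t by (intro mult_right_mono) (auto intro: mult_le_one)
      also have "\<dots> \<le> 2^N * (exp (- A * s^2) * exp (- A * t^2))" using absV by simp
      finally show "G t \<le> 2^N * exp (- A * s^2) * exp (- A * t^2)" by (simp add: mult.assoc)
    qed
    also have "\<dots> = 2^N * exp (- A * s^2) * J" unfolding J_def by (simp add: integral_mult_right)
    finally show ?thesis .
  qed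
  have d: "integral {0..1} H \<le> 2^N * J * J"
  proof -
    have "integral {0..1} H \<le> integral {0..1} (\<lambda>s. 2^N * exp (- A * s^2) * J)"
    proof (rule integral_le)
      show "H integrable_on {0..1}" by (rule integrable_continuous_interval[OF contH])
      show "(\<lambda>s. 2^N * exp (- A * s^2) * J) integrable_on {0..1}"
        by (intro integrable_continuous_interval continuous_intros)
      show "\<And>s. s \<in> {0..1} \<Longrightarrow> H s \<le> 2^N * exp (- A * s^2) * J" by (rule c)
    qed
    also have "\<dots> = 2^N * J * J" unfolding J_def
      by (simp add: integral_mult_left integral_mult_right mult.assoc)
    finally show ?thesis .
  qed
  have J0: "0 \<le> J" unfolding J_def
    by (rule integral_nonneg) (auto intro!: integrable_continuous_interval continuous_intros)
  have J1: "J \<le> pi / (2 * sqrt A)" unfolding J_def using J_bound[OF A] .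
  have "J * J \<le> (pi / (2 * sqrt A)) * (pi / (2 * sqrt A))" using J0 J1 by (intro mult_mono) auto
  also have "\<dots> = pi^2 / (4 * A)" using A by (simp add: power2_eq_square)
  finally have JJ: "J * J \<le> pi^2 / (4 * A)" .
  have "real (card {r\<in>S. \<bar>X r\<bar> \<le> 1 \<and> \<bar>Y r\<bar> \<le> 1}) \<le> 16 * (2^N * (J * J))"
    using a b d by (simp add: sum_distrib_left[symmetric] mult.assoc)
  also have "\<dots> \<le> 16 * (2^N * (pi^2 / (4 * A)))"
    using JJ by (intro mult_left_mono) auto
  also have "\<dots> = 4 * pi^2 / A * 2^N" by (simp add: field_simps)
  finally show ?thesis unfolding S_def X_def Y_def .
qed



lemma vec_on_supp: "vec_on N u \<Longrightarrow> vsupp u \<subseteq> {..<N}"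
  unfolding vec_on_def vsupp_def by (auto simp: not_less[symmetric])

lemma unit_sum: "u \<in> unit_sphere N \<Longrightarrow> (\<Sum>j<N. (u j)^2) = 1"
  unfolding unit_sphere_def l2norm_def by auto

lemma prod_cos_bound:
  fixes u1 u2 :: "nat \<Rightarrow> real"
  assumes B: "(u1,u2) \<in> Bases N (2*d) \<rho> \<delta>" and \<rho>: "\<rho> > 0" and \<delta>: "\<delta> > 0" and d: "d \<ge> 1"
    and L: "\<alpha>^2 + \<beta>^2 \<le> 2*\<delta>*d"
  shows "\<bar>\<Prod>j<N. cos (\<alpha> * u1 j + \<beta> * u2 j)\<bar> \<le> exp (- (\<rho>^2 * (\<alpha>^2+\<beta>^2)) / 3)"
proof (cases "\<alpha>^2 + \<beta>^2 = 0")
  case True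
  hence "\<alpha> = 0" "\<beta> = 0" by (auto simp: add_nonneg_eq_0_iff)
  thus ?thesis by simp
next
  case False
  have u1: "u1 \<in> unit_sphere N" and u2: "u2 \<in> unit_sphere N" and orth: "(\<Sum>j<N. u1 j * u2 j) = 0"
    and cardU: "card (vsupp u1 \<union> vsupp u2) \<le> 2*d"
    and notC: "\<And>a b. (\<lambda>j. a * u1 j + b * u2 j) \<notin> Comp N (2*d) \<rho> \<delta>"
    using B unfolding Bases_def by auto
  have v1: "vec_on N u1" and v2: "vec_on N u2" using u1 u2 by (auto simp: unit_sphere_def)
  have s1: "(\<Sum>j<N. (u1 j)^2) = 1" and s2: "(\<Sum>j<N. (u2 j)^2) = 1" using unit_sum u1 u2 by auto
  define Q where "Q = \<alpha>^2 + \<beta>^2"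
  have Q0: "Q > 0" using False unfolding Q_def by (simp add: add_nonneg_nonneg less_le)
  define L where "L = sqrt Q"
  have L0: "L > 0" using Q0 by (simp add: L_def)
  have LQ: "L^2 = Q" using Q0 by (simp add: L_def)
  define a where "a = \<alpha> / L"
  define b where "b = \<beta> / L"
  define w where "w j = a * u1 j + b * u2 j" for j
  have ab: "a^2 + b^2 = 1"
  proof -
    have "a^2 + b^2 = Q / L^2" unfolding a_def b_def Q_def by (simp add: power_divide add_divide_distrib)
    thus ?thesis using LQ Q0 by simp
  qed
  have aw: "\<alpha> * u1 j + \<beta> * u2 j = L * w j" for j
    using L0 unfolding w_def a_def b_def by (simp add: field_simps)
  have sw: "(\<Sum>j<N. (w j)^2) = 1"
  proof -
    have "(\<Sum>j<N. (w j)^2) = a^2 * (\<Sum>j<N. (u1 j)^2) + 2*a*b * (\<Sum>j<N. u1 j * u2 j) + b^2 * (\<Sum>j<N. (u2 j)^2)"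
      unfolding w_def sum_distrib_left sum.distrib[symmetric] by (rule sum.cong) (auto simp: power2_eq_square algebra_simps)
    thus ?thesis using s1 s2 orth ab by simp
  qed
  have vw: "vec_on N w" using v1 v2 unfolding vec_on_def w_def by auto
  have suppw: "vsupp w \<subseteq> vsupp u1 \<union> vsupp u2" unfolding vsupp_def w_def by auto
  have finU: "finite (vsupp u1 \<union> vsupp u2)"
    using vec_on_supp[OF v1] vec_on_supp[OF v2] by (meson finite_lessThan finite_subset le_sup_iff)
  have wsp: "w \<in> sparse_sphere N (2*d)"
    unfolding sparse_sphere_def unit_sphere_def l2norm_def
    using vw sw card_mono[OF finU suppw] cardU by auto
  have wnC: "w \<notin> Comp N (2*d) \<rho> \<delta>" using notC[of a b] unfolding w_def[abs_def] .
  define T where "T = {j \<in> vsupp w. (w j)^2 > 1 / (2*\<delta>*d)}"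
  have Dpos: "2*\<delta>*d > 0" using \<delta> d by simp
  have wN: "vsupp w \<subseteq> {..<N}" by (rule vec_on_supp[OF vw])
  have TN: "T \<subseteq> {..<N}" using wN unfolding T_def by auto
  have finT: "finite T" using TN finite_subset by blast
  have cardT: "real (card T) \<le> \<delta> * real (2*d)"
  proof -
    have "real (card T) * (1 / (2*\<delta>*d)) = (\<Sum>j\<in>T. 1 / (2*\<delta>*d))" by simp
    also have "\<dots> \<le> (\<Sum>j\<in>T. (w j)^2)" by (rule sum_mono) (auto simp: T_def)
    also have "\<dots> \<le> (\<Sum>j<N. (w j)^2)" by (rule sum_mono2) (use TN in auto)
    finally have "real (card T) * (1 / (2*\<delta>*d)) \<le> 1" using sw by simp
    thus ?thesis using Dpos by (simp add: field_simps)
  qed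
  define U where "U = vsupp w - T"
  have "\<not> sqrt (\<Sum>j\<in>U. (w j)^2) \<le> \<rho>"
    using wnC wsp cardT unfolding Comp_def U_def T_def by auto
  hence "\<rho> < sqrt (\<Sum>j\<in>U. (w j)^2)" by simp
  hence "sqrt (\<rho>^2) < sqrt (\<Sum>j\<in>U. (w j)^2)" using \<rho> by simp
  hence sU: "\<rho>^2 < (\<Sum>j\<in>U. (w j)^2)" using real_sqrt_less_iff by blast
  have UN: "U \<subseteq> {..<N}" using wN unfolding U_def by auto
  have small: "\<bar>L * w j\<bar> \<le> 1" if j: "j \<in> U" for j
  proof -
    have "(w j)^2 \<le> 1 / (2*\<delta>*d)" using j unfolding U_def T_def by auto
    hence "L^2 * (w j)^2 \<le> (2*\<delta>*d) * (1 / (2*\<delta>*d))"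
      using LQ L Q_def Dpos by (intro mult_mono) auto
    hence "(L * w j)^2 \<le> 1" using \<delta> d by (simp add: power_mult_distrib)
    thus ?thesis using abs_le_square_iff[of "L * w j" 1] by simp
  qed
  have "\<bar>\<Prod>j<N. cos (\<alpha> * u1 j + \<beta> * u2 j)\<bar> = (\<Prod>j<N. \<bar>cos (L * w j)\<bar>)"
    by (simp add: aw abs_prod)
  also have "\<dots> = (\<Prod>j\<in>U. \<bar>cos (L * w j)\<bar>) * (\<Prod>j\<in>{..<N} - U. \<bar>cos (L * w j)\<bar>)"
    using prod.subset_diff[OF UN] by (simp add: mult.commute)
  also have "\<dots> \<le> (\<Prod>j\<in>U. \<bar>cos (L * w j)\<bar>) * 1"
    by (intro mult_left_mono prod_le_1 prod_nonneg) auto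
  also have "\<dots> \<le> (\<Prod>j\<in>U. exp (- ((L * w j)^2) / 3))"
    using small abs_cos_exp by (simp add: prod_mono)
  also have "\<dots> = exp (\<Sum>j\<in>U. - ((L * w j)^2) / 3)"
    using finite_subset[OF UN] by (simp add: exp_sum)
  also have "(\<Sum>j\<in>U. - ((L * w j)^2) / 3) = - (Q * (\<Sum>j\<in>U. (w j)^2)) / 3"
    by (simp add: power_mult_distrib LQ sum_distrib_left sum_divide_distrib sum_negf)
  also have "exp \<dots> \<le> exp (- (\<rho>^2 * (\<alpha>^2+\<beta>^2)) / 3)"
    using sU Q0 unfolding Q_def[symmetric] by (simp add: mult.commute mult_strict_left_mono less_imp_le)
  finally show ?thesis .
qed



lemma count_rows:
  fixes Q :: "(nat \<Rightarrow> real) \<Rightarrow> bool"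
  shows "card {R \<in> sign_matrices h N. \<forall>i<h. Q (\<lambda>j\<in>{..<N}. R (i,j))}
       = card {r \<in> PiE {..<N} (\<lambda>_. {-1,1::real}). Q r} ^ h"
proof -
  define G where "G = {r \<in> PiE {..<N} (\<lambda>_. {-1,1::real}). Q r}"
  define A where "A = {R \<in> sign_matrices h N. \<forall>i<h. Q (\<lambda>j\<in>{..<N}. R (i,j))}"
  define \<Phi> where "\<Phi> R = (\<lambda>i\<in>{..<h}. \<lambda>j\<in>{..<N}. R (i,j))" for R :: "nat \<times> nat \<Rightarrow> real"
  define \<Psi> where "\<Psi> F = (\<lambda>(i,j). if i < h \<and> j < N then F i j else undefined)" for F :: "nat \<Rightarrow> nat \<Rightarrow> real"
  have bij: "bij_betw \<Phi> A (PiE {..<h} (\<lambda>_. G))"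
  proof (rule bij_betw_byWitness[where f'=\<Psi>])
    show "\<forall>a\<in>A. \<Psi> (\<Phi> a) = a"
      unfolding A_def sign_matrices_def \<Phi>_def \<Psi>_def
      by (auto simp: PiE_def extensional_def fun_eq_iff)
    show "\<forall>a'\<in>PiE {..<h} (\<lambda>_. G). \<Phi> (\<Psi> a') = a'"
    proof
      fix F assume F: "F \<in> PiE {..<h} (\<lambda>_. G)"
      show "\<Phi> (\<Psi> F) = F"
      proof (rule ext)
        fix i show "\<Phi> (\<Psi> F) i = F i"
        proof (cases "i < h")
          case True
          hence "F i \<in> PiE {..<N} (\<lambda>_. {-1,1::real})" using F unfolding G_def by auto
          thus ?thesis using True unfolding \<Phi>_def \<Psi>_def by (auto simp: PiE_def extensional_def fun_eq_iff)
        next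
          case False thus ?thesis using F unfolding \<Phi>_def by (auto simp: PiE_def extensional_def)
        qed
      qed
    qed
    show "\<Phi> ` A \<subseteq> PiE {..<h} (\<lambda>_. G)"
      unfolding A_def G_def sign_matrices_def \<Phi>_def
      by (auto simp: PiE_def Pi_def extensional_def; metis)
    show "\<Psi> ` PiE {..<h} (\<lambda>_. G) \<subseteq> A"
    proof
      fix R assume "R \<in> \<Psi> ` PiE {..<h} (\<lambda>_. G)"
      then obtain F where F: "F \<in> PiE {..<h} (\<lambda>_. G)" and R: "R = \<Psi> F" by auto
      have rowF: "(\<lambda>j\<in>{..<N}. R (i,j)) = F i" if "i < h" for i
      proof -
        have "F i \<in> G" using F that by auto
        hence "F i \<in> PiE {..<N} (\<lambda>_. {-1,1::real})" unfolding G_def by auto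
        thus ?thesis using that unfolding R \<Psi>_def by (auto simp: PiE_def extensional_def fun_eq_iff)
      qed
      have "R \<in> sign_matrices h N"
        unfolding sign_matrices_def
      proof (rule PiE_I)
        fix x assume x: "x \<in> {0..<h} \<times> {0..<N}"
        then obtain i j where ij: "x = (i,j)" "i < h" "j < N" by auto
        have "F i \<in> PiE {..<N} (\<lambda>_. {-1,1::real})" using F ij unfolding G_def by auto
        thus "R x \<in> {-1,1}" using ij unfolding R \<Psi>_def by auto
      next
        fix x assume "x \<notin> {0..<h} \<times> {0..<N}"
        thus "R x = undefined" unfolding R \<Psi>_def by (auto split: prod.splits)
      qed
      moreover have "\<forall>i<h. Q (\<lambda>j\<in>{..<N}. R (i,j))"
        using rowF F unfolding G_def by auto
      ultimately show "R \<in> A" unfolding A_def by auto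
    qed
  qed
  have "card A = card (PiE {..<h} (\<lambda>_. G))" by (rule bij_betw_same_card[OF bij])
  also have "\<dots> = card G ^ h" by (simp add: card_PiE)
  finally show ?thesis unfolding A_def G_def .
qed



lemma sup_norm_le: "0 \<le> c \<Longrightarrow> sup_norm h v \<le> c \<longleftrightarrow> (\<forall>i<h. \<bar>v i\<bar> \<le> c)"
  unfolding sup_norm_def by (auto simp: Max_le_iff)

lemma main_bound:
  fixes \<rho> \<delta> :: real and u1 u2 :: "nat \<Rightarrow> real"
  assumes \<rho>: "0<\<rho>" "\<rho><1" and \<delta>: "0<\<delta>" "\<delta><1" and d: "d \<ge> 1" and B: "(u1,u2) \<in> Bases N (2*d) \<rho> \<delta>"
  shows "measure_pmf.prob (rademacher_matrix h N)
            {R. sup_norm h (mat_vec N R u1) \<le> 1 / sqrt (\<delta> * real d) \<and>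
                sup_norm h (mat_vec N R u2) \<le> 1 / sqrt (\<delta> * real d)}
          \<le> 200 ^ h * (\<rho> ^ 4 * \<delta> * real d) powr (- real h)"
proof -
  define D where "D = \<delta> * real d"
  have D0: "D > 0" using \<delta> d by (simp add: D_def)
  define l where "l = sqrt D"
  have l0: "l > 0" using D0 by (simp add: l_def)
  have l2: "l^2 = D" using D0 by (simp add: l_def)
  define A where "A = \<rho>^2 * D / 3"
  have A0: "A > 0" using D0 \<rho> by (simp add: A_def)
  define Q where "Q r = (\<bar>\<Sum>j<N. r j * (l*u1 j)\<bar> \<le> 1 \<and> \<bar>\<Sum>j<N. r j * (l*u2 j)\<bar> \<le> 1)" for r :: "nat \<Rightarrow> real"
  define G where "G = {r \<in> PiE {..<N} (\<lambda>_. {-1,1::real}). Q r}"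
  have key: "\<bar>\<Prod>j<N. cos (s * (l*u1 j) + t * (l*u2 j))\<bar> \<le> exp (- A * s^2) * exp (- A * t^2)"
    if st: "0\<le>s" "s\<le>1" "\<bar>t\<bar>\<le>1" for s t
  proof -
    have s2: "s^2 \<le> 1" using st by (simp add: power_le_one)
    have t2: "t^2 \<le> 1" using st by (metis abs_le_square_iff abs_one one_power2)
    have "(s*l)^2 + (t*l)^2 = (s^2+t^2) * D" by (simp add: power_mult_distrib l2 algebra_simps)
    also have "\<dots> \<le> 2 * D" using s2 t2 D0 by (intro mult_right_mono) auto
    finally have "(s*l)^2 + (t*l)^2 \<le> 2*\<delta>*real d" by (simp add: D_def)
    from prod_cos_bound[OF B \<rho>(1) \<delta>(1) d this]
    have "\<bar>\<Prod>j<N. cos ((s*l) * u1 j + (t*l) * u2 j)\<bar> \<le> exp (- (\<rho>^2 * ((s*l)^2+(t*l)^2)) / 3)" .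
    moreover have eq: "- (\<rho>^2 * ((s*l)^2+(t*l)^2)) / 3 = (- A * s^2) + (- A * t^2)"
      by (simp add: A_def power_mult_distrib l2 field_simps)
    moreover have "exp (- A * s^2) * exp (- A * t^2) = exp (- (\<rho>^2 * ((s*l)^2+(t*l)^2)) / 3)"
      by (simp only: exp_add[symmetric] eq)
    moreover have "(\<Prod>j<N. cos (s * (l*u1 j) + t * (l*u2 j))) = (\<Prod>j<N. cos ((s*l) * u1 j + (t*l) * u2 j))"
      by (rule prod.cong) (auto simp: algebra_simps)
    ultimately show ?thesis by simp
  qed
  have cardG: "real (card G) \<le> 4 * pi^2 / A * 2^N"
    unfolding G_def Q_def
  proof (rule row_bound[OF A0])
    fix s t :: real assume "0\<le>s" "s\<le>1" "0\<le>t" "t\<le>1"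
    thus "\<bar>\<Prod>j<N. cos (s * (l*u1 j) + t * (l*u2 j))\<bar> \<le> exp (- A * s^2) * exp (- A * t^2)"
      by (intro key) auto
    have "\<bar>\<Prod>j<N. cos (s * (l*u1 j) + (-t) * (l*u2 j))\<bar> \<le> exp (- A * s^2) * exp (- A * (-t)^2)"
      using \<open>0\<le>s\<close> \<open>s\<le>1\<close> \<open>0\<le>t\<close> \<open>t\<le>1\<close> by (intro key) auto
    thus "\<bar>\<Prod>j<N. cos (s * (l*u1 j) - t * (l*u2 j))\<bar> \<le> exp (- A * s^2) * exp (- A * t^2)"
      by simp
  qed
  define SM where "SM = sign_matrices h N"
  define E where "E = {R. sup_norm h (mat_vec N R u1) \<le> 1 / sqrt (\<delta> * real d) \<and>
                sup_norm h (mat_vec N R u2) \<le> 1 / sqrt (\<delta> * real d)}"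
  have il: "1 / sqrt (\<delta> * real d) = 1 / l" by (simp add: l_def D_def)
  have rowv: "\<bar>mat_vec N R u i\<bar> \<le> 1/l \<longleftrightarrow> \<bar>\<Sum>j<N. (\<lambda>j\<in>{..<N}. R (i,j)) j * (l * u j)\<bar> \<le> 1"
    for R u i
  proof -
    have "(\<Sum>j<N. (\<lambda>j\<in>{..<N}. R (i,j)) j * (l * u j)) = l * mat_vec N R u i"
      unfolding mat_vec_def sum_distrib_left by (rule sum.cong) auto
    hence "\<bar>\<Sum>j<N. (\<lambda>j\<in>{..<N}. R (i,j)) j * (l * u j)\<bar> = l * \<bar>mat_vec N R u i\<bar>"
      using l0 by (simp add: abs_mult)
    thus ?thesis using l0 by (simp add: field_simps)
  qed
  have ev: "SM \<inter> E = {R \<in> SM. \<forall>i<h. Q (\<lambda>j\<in>{..<N}. R (i,j))}"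
    unfolding E_def Q_def il using l0 by (auto simp: sup_norm_le rowv)
  have finSM: "finite SM" unfolding SM_def sign_matrices_def by (intro finite_PiE) auto
  have neSM: "SM \<noteq> {}" unfolding SM_def sign_matrices_def by (simp add: PiE_eq_empty_iff)
  have cardSM: "card SM = 2^(h*N)" unfolding SM_def sign_matrices_def
    by (simp add: card_PiE card_cartesian_product) (metis numeral_2_eq_2)
  have "measure_pmf.prob (rademacher_matrix h N) E = real (card (SM \<inter> E)) / real (card SM)"
    unfolding rademacher_matrix_def SM_def[symmetric] using finSM neSM by (simp add: measure_pmf_of_set)
  also have "card (SM \<inter> E) = card G ^ h" unfolding ev using count_rows[of h N Q] unfolding SM_def G_def .
  also have "real (card G ^ h) / real (card SM) = (real (card G) / 2^N)^h"
    unfolding cardSM by (simp add: power_divide power_mult mult.commute[of h N])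
  also have "\<dots> \<le> (200 / (\<rho>^4 * D))^h"
  proof (rule power_mono)
    show "0 \<le> real (card G) / 2^N" by simp
    have "real (card G) / 2^N \<le> 4 * pi^2 / A" using cardG by (simp add: field_simps)
    also have "4 * pi^2 / A = 12 * pi^2 / (\<rho>^2 * D)" by (simp add: A_def)
    also have "\<dots> \<le> 200 / (\<rho>^2 * D)"
    proof -
      have "pi^2 \<le> 4^2" using pi_less_4 pi_gt_zero by (intro power_mono) auto
      hence "12 * pi^2 \<le> 200" by simp
      thus ?thesis using \<rho> D0 by (intro divide_right_mono) auto
    qed
    also have "\<dots> \<le> 200 / (\<rho>^4 * D)"
    proof -
      have "\<rho>^4 \<le> \<rho>^2" using \<rho> by (intro power_decreasing) auto
      hence "\<rho>^4 * D \<le> \<rho>^2 * D" using D0 by (intro mult_right_mono) auto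
      thus ?thesis using \<rho> D0 by (intro divide_left_mono) auto
    qed
    finally show "real (card G) / 2^N \<le> 200 / (\<rho>^4 * D)" .
  qed
  also have "\<dots> = 200 ^ h * (\<rho> ^ 4 * \<delta> * real d) powr (- real h)"
  proof -
    have p: "\<rho>^4 * D > 0" using \<rho> D0 by simp
    have "(\<rho>^4 * D) powr (- real h) = inverse ((\<rho>^4 * D)^h)"
      using p by (simp add: powr_minus powr_realpow)
    have "(200 / (\<rho>^4 * D))^h = 200^h / (\<rho>^4 * D)^h" by (rule power_divide)
    also have "\<dots> = 200^h * inverse ((\<rho>^4 * D)^h)" by (rule divide_inverse)
    also have "\<dots> = 200^h * (\<rho>^4 * D) powr (- real h)" using \<open>(\<rho>^4 * D) powr (- real h) = _\<close> by simp
    finally show ?thesis by (simp add: D_def mult.assoc)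
  qed
  finally show ?thesis unfolding E_def .
qed


theorem corollary5p3:
  shows "\<exists>C1::real. C1 > 1 \<and>
    (\<forall>\<rho> \<delta>::real. 0 < \<rho> \<and> \<rho> < 1 \<and> 0 < \<delta> \<and> \<delta> < 1 \<longrightarrow>
      (\<exists>d0::nat. \<forall>d h N::nat. d \<ge> d0 \<longrightarrow>
        (\<forall>(u1, u2) \<in> Bases N (2 * d) \<rho> \<delta>.
          measure_pmf.prob (rademacher_matrix h N)
            {R. sup_norm h (mat_vec N R u1) \<le> 1 / sqrt (\<delta> * real d) \<and>
                sup_norm h (mat_vec N R u2) \<le> 1 / sqrt (\<delta> * real d)}
          \<le> C1 ^ h * (\<rho> ^ 4 * \<delta> * real d) powr (- real h))))"
proof (intro exI[of _ "200::real"] conjI allI impI)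
  show "(200::real) > 1" by simp
next
  fix \<rho> \<delta> :: real assume hyp: "0 < \<rho> \<and> \<rho> < 1 \<and> 0 < \<delta> \<and> \<delta> < 1"
  show "\<exists>d0::nat. \<forall>d h N::nat. d \<ge> d0 \<longrightarrow>
        (\<forall>(u1, u2) \<in> Bases N (2 * d) \<rho> \<delta>.
          measure_pmf.prob (rademacher_matrix h N)
            {R. sup_norm h (mat_vec N R u1) \<le> 1 / sqrt (\<delta> * real d) \<and>
                sup_norm h (mat_vec N R u2) \<le> 1 / sqrt (\<delta> * real d)}
          \<le> 200 ^ h * (\<rho> ^ 4 * \<delta> * real d) powr (- real h))"
  proof (intro exI[of _ 1] allI impI ballI)
    fix d h N :: nat and p assume d: "1 \<le> d" and p: "p \<in> Bases N (2 * d) \<rho> \<delta>"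
    obtain u1 u2 where p12: "p = (u1,u2)" by (cases p)
    show "case p of (u1, u2) \<Rightarrow> measure_pmf.prob (rademacher_matrix h N)
            {R. sup_norm h (mat_vec N R u1) \<le> 1 / sqrt (\<delta> * real d) \<and>
                sup_norm h (mat_vec N R u2) \<le> 1 / sqrt (\<delta> * real d)}
          \<le> 200 ^ h * (\<rho> ^ 4 * \<delta> * real d) powr (- real h)"
      unfolding p12 using main_bound[of \<rho> \<delta> d u1 u2 N h] hyp d p p12 by auto
  qed
qed

end
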